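(* Let $s_t(\theta)$, $t\in[0,T]$, be trajectories smoothly parameterized by $\theta\in\Theta$ with $\frac{\partial s_t(\theta)}{\partial t}=f_t(s_t(\theta))$ for a smooth $f_t$, and with observation model $y_t=h(s_t(\theta),u_t)+W_t$, $W_t$ white noise with invertible covariance $R_t$. Set $F_t(s):=\partial f_t(s)/\partial s$, $G_t:=\partial s_t(\theta)/\partial\theta$ (assumed invertible), $H_t:=\partial h(s_t,u_t)/\partial s_t$. Let $\mathbf y$ be a smooth function, and consider the continuous-time online natural gradient for this model with observations $\mathbf y$, using at time $t$ the covariant derivative $D^t$ associated with the chart $\theta\mapsto s_t(\theta)$. Let $J_{t\downarrow t}:=(G_t(\theta_t)^{-1})^\top J_tG_t(\theta_t)^{-1}$ be the matrix of $J_t$ in chart $s_t$. Then $$\frac{d}{dt}J_{t\downarrow t}=-F_t^\top J_{t\downarrow t}-J_{t\downarrow t}F_t-\gamma_tJ_{t\downarrow t}+\gamma_tH_t^\top R_t^{-1}H_t,$$ $$\dot\theta_t=\eta_tG_t^{-1}J_{t\downarrow t}^{-1}H_t^\top R_t^{-1}\big(y_t-h(s_t(\theta_t),u_t)\big),$$ initialized with $J_{0\downarrow0}=(G_0^{-1})^\top J_0G_0^{-1}$, where $F_t,H_t$ are evaluated at $s_t(\theta_t)$ and $G_t$ at $\theta_t$. Moreover $$\frac{d}{dt}s_t(\theta_t)=f_t(s_t(\theta_t))+\eta_tJ_{t\downarrow t}^{-1}H_t^\top R_t^{-1}\big(y_t-h(s_t(\theta_t),u_t)\big).$$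
   Context: Continuous-time online natural gradient: given learning rates $\eta_t$, decay rates $\gamma_t$ and covariant derivatives, it is the solution $(\theta_t,J_t)$ ($J_t$ a positive definite $(0,2)$-tensor at $\theta_t$, written as a matrix in the chart $\theta$) of $\frac{DJ_t}{dt}=-\gamma_tJ_t+\gamma_tj_t(\theta_t)$, $\dot\theta_t=\eta_tJ_t^{-1}(\partial\ell_t(\mathbf y\mid\theta)/\partial\theta|_{\theta_t})^\top$, where, with $p(\mathbf y\mid\theta)$ the density of the model w.r.t. the Wiener measure (law of the centered white noise with covariance $R_t$), $J_{[0,T]}(\theta)=\mathbb E_{\mathbf y\sim p(\cdot\mid\theta)}[(\partial\ln p(\mathbf y\mid\theta)/\partial\theta)^{\otimes2}]$, $j_t=\frac{d}{dt}J_{[0,t]}$, and $\ell_t(\mathbf y\mid\theta)=\frac{d}{dt}\ln p(y_{[0,t]}\mid\theta)$. Covariant derivative associated with a chart $\Phi$: $\frac{DZ_t}{dt}=\mathbf T_{\theta_t}\Phi^{-1}(\frac{d}{dt}\mathbf T\Phi(Z_t))$, $\mathbf T\Phi$ denoting coordinate expression. Gradients are row vectors; $v^{\otimes2}=v^\top v$ for row vectors. *)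

theory Defs
  imports "HOL-Analysis.Analysis"
begin

fun hdiff_on :: "nat \<Rightarrow> 'a::real_normed_vector set \<Rightarrow> ('a \<Rightarrow> 'b::real_normed_vector) \<Rightarrow> bool" where
  "hdiff_on 0 S f = continuous_on S f"
| "hdiff_on (Suc k) S f =
     ((\<forall>x\<in>S. f differentiable (at x)) \<and>
      (\<forall>v. hdiff_on k S (\<lambda>x. frechet_derivative f (at x) v)))"

definition smooth_on :: "'a::real_normed_vector set \<Rightarrow> ('a \<Rightarrow> 'b::real_normed_vector) \<Rightarrow> bool" where
  "smooth_on S f \<longleftrightarrow> open S \<and> (\<forall>k. hdiff_on k S f)"

definition jacobian :: "(real^'n \<Rightarrow> real^'m) \<Rightarrow> real^'n \<Rightarrow> real^'n^'m" where
  "jacobian g x = matrix (frechet_derivative g (at x))"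

definition grad :: "(real^'n \<Rightarrow> real) \<Rightarrow> real^'n \<Rightarrow> real^'n" where
  "grad g x = (\<chi> i. frechet_derivative g (at x) (axis i 1))"

definition pos_def :: "real^'n^'n \<Rightarrow> bool" where
  "pos_def A \<longleftrightarrow> transpose A = A \<and> (\<forall>x. x \<noteq> 0 \<longrightarrow> x \<bullet> (A *v x) > 0)"

definition pos_semidef :: "real^'n^'n \<Rightarrow> bool" where
  "pos_semidef A \<longleftrightarrow> transpose A = A \<and> (\<forall>x. x \<bullet> (A *v x) \<ge> 0)"

text \<open>Coordinate expression in the chart Phi (Jacobian A at the base point) of the
 (0,2)-tensor written as the matrix M in the chart theta, and its inverse.\<close>
definition tensor_coord :: "real^'n^'n \<Rightarrow> real^'n^'n \<Rightarrow> real^'n^'n" where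
  "tensor_coord A M = transpose (matrix_inv A) ** M ** matrix_inv A"

definition tensor_uncoord :: "real^'n^'n \<Rightarrow> real^'n^'n \<Rightarrow> real^'n^'n" where
  "tensor_uncoord A M = transpose A ** M ** A"

text \<open>has_cov_deriv Phi th Z D t S: along the curve th, the tensor field Z
 has covariant derivative D at time t (relative to S), for the covariant
 derivative associated with the (fixed) chart Phi:
 D = T Phi^{-1} (d/dtau T Phi (Z_tau)) at tau = t.\<close>
definition has_cov_deriv ::
  "(real^'n \<Rightarrow> real^'n) \<Rightarrow> (real \<Rightarrow> real^'n) \<Rightarrow> (real \<Rightarrow> real^'n^'n) \<Rightarrow> real^'n^'n
     \<Rightarrow> real \<Rightarrow> real set \<Rightarrow> bool" where
  "has_cov_deriv Phi th Z D t S \<longleftrightarrow>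
     (\<exists>M. ((\<lambda>\<tau>. tensor_coord (jacobian Phi (th \<tau>)) (Z \<tau>)) has_vector_derivative M) (at t within S)
          \<and> D = tensor_uncoord (jacobian Phi (th t)) M)"

text \<open>ell t theta : instantaneous log-likelihood rate, j t theta : Fisher information rate,
 chart t : chart used for the covariant derivative at time t.\<close>
definition ong_solution ::
  "real \<Rightarrow> (real^'n) set \<Rightarrow> (real \<Rightarrow> real) \<Rightarrow> (real \<Rightarrow> real)
     \<Rightarrow> (real \<Rightarrow> real^'n \<Rightarrow> real) \<Rightarrow> (real \<Rightarrow> real^'n \<Rightarrow> real^'n^'n)
     \<Rightarrow> (real \<Rightarrow> real^'n \<Rightarrow> real^'n)
     \<Rightarrow> (real \<Rightarrow> real^'n) \<Rightarrow> (real \<Rightarrow> real^'n^'n) \<Rightarrow> bool" where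
  "ong_solution T Theta eta gamma ell j chart th J \<longleftrightarrow>
     (\<forall>t\<in>{0..T}.
        th t \<in> Theta \<and> pos_def (J t) \<and>
        has_cov_deriv (chart t) th J (- (gamma t *\<^sub>R J t) + gamma t *\<^sub>R j t (th t)) t {0..T} \<and>
        (th has_vector_derivative (eta t *\<^sub>R (matrix_inv (J t) *v grad (ell t) (th t)))) (at t within {0..T}))"

text \<open>Log-likelihood rate d/dt ln p(y_[0,t] | theta) for white-noise observations with
 smooth observed signal y (Girsanov density w.r.t. the Wiener measure of covariance R):
 ln p = int h^T R^-1 dy - 1/2 int h^T R^-1 h dt.\<close>
definition obs_loglik_rate ::
  "(real \<Rightarrow> real^'n \<Rightarrow> real^'n) \<Rightarrow> (real^'n \<Rightarrow> 'u \<Rightarrow> real^'m) \<Rightarrow> (real \<Rightarrow> 'u)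
     \<Rightarrow> (real \<Rightarrow> real^'m^'m) \<Rightarrow> (real \<Rightarrow> real^'m) \<Rightarrow> real \<Rightarrow> real^'n \<Rightarrow> real" where
  "obs_loglik_rate s h u R y t th =
     h (s t th) (u t) \<bullet> (matrix_inv (R t) *v y t)
     - (1/2) * (h (s t th) (u t) \<bullet> (matrix_inv (R t) *v h (s t th) (u t)))"

text \<open>Fisher information rate j_t = d/dt J_[0,t] for this model:
 (dh/dtheta)^T R^-1 (dh/dtheta).\<close>
definition obs_fisher_rate ::
  "(real \<Rightarrow> real^'n \<Rightarrow> real^'n) \<Rightarrow> (real^'n \<Rightarrow> 'u \<Rightarrow> real^'m) \<Rightarrow> (real \<Rightarrow> 'u)
     \<Rightarrow> (real \<Rightarrow> real^'m^'m) \<Rightarrow> real \<Rightarrow> real^'n \<Rightarrow> real^'n^'n" where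
  "obs_fisher_rate s h u R t th =
     (let Dh = jacobian (\<lambda>x. h (s t x) (u t)) th in transpose Dh ** matrix_inv (R t) ** Dh)"

end

theory Submission
  imports Defs
begin

lemma line_deriv:
  fixes g :: "'a::real_normed_vector \<Rightarrow> real"
  assumes "(g has_derivative G) (at (c + a *\<^sub>R w))"
  shows "((\<lambda>\<alpha>. g (c + \<alpha> *\<^sub>R w)) has_real_derivative G w) (at a)"
proof -
  have l: "((\<lambda>\<alpha>. c + \<alpha> *\<^sub>R w) has_derivative (\<lambda>h. h *\<^sub>R w)) (at a)"
    by (auto intro!: derivative_eq_intros)
  have "((g \<circ> (\<lambda>\<alpha>. c + \<alpha> *\<^sub>R w)) has_derivative (G \<circ> (\<lambda>h. h *\<^sub>R w))) (at a)"
    by (rule diff_chain_at[OF l]) (use assms in simp)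
  moreover have "G \<circ> (\<lambda>h. h *\<^sub>R w) = (*) (G w)"
  proof -
    have "linear G" using has_derivative_bounded_linear[OF assms] bounded_linear.linear by blast
    then show ?thesis by (auto simp: fun_eq_iff linear_scale)
  qed
  ultimately show ?thesis by (simp add: has_field_derivative_def o_def)
qed

lemma clairaut_half:
  fixes g :: "'a::real_normed_vector \<Rightarrow> real"
  assumes U: "ball z r \<subseteq> U"
  and dg: "\<And>y. y \<in> U \<Longrightarrow> (g has_derivative Dg y) (at y)"
  and dw: "\<And>y. y \<in> U \<Longrightarrow> ((\<lambda>y. Dg y w) has_derivative B y) (at y)"
  and a: "0 < a" "a * (norm v + norm w) < r"
  shows "\<exists>p. dist z p \<le> a * (norm v + norm w) \<and>
     g (z + a *\<^sub>R v + a *\<^sub>R w) - g (z + a *\<^sub>R v) - g (z + a *\<^sub>R w) + g z = a * a * B p v"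
proof -
  have inU: "z + \<alpha> *\<^sub>R w + \<beta> *\<^sub>R v \<in> U" if "0 \<le> \<alpha>" "\<alpha> \<le> a" "0 \<le> \<beta>" "\<beta> \<le> a" for \<alpha> \<beta>
  proof -
    have "dist z (z + \<alpha> *\<^sub>R w + \<beta> *\<^sub>R v) = norm (\<alpha> *\<^sub>R w + \<beta> *\<^sub>R v)"
      by (simp add: dist_norm algebra_simps norm_minus_commute)
    also have "\<dots> \<le> \<alpha> * norm w + \<beta> * norm v"
      using norm_triangle_ineq[of "\<alpha> *\<^sub>R w" "\<beta> *\<^sub>R v"] that by simp
    also have "\<dots> \<le> a * norm w + a * norm v"
      using that by (intro add_mono mult_right_mono) auto
    also have "\<dots> < r" using a by (simp add: algebra_simps)
    finally show ?thesis using U by auto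
  qed
  define \<psi> where "\<psi> \<alpha> = g ((z + a *\<^sub>R v) + \<alpha> *\<^sub>R w) - g (z + \<alpha> *\<^sub>R w)" for \<alpha>
  have "\<exists>\<xi>. 0 < \<xi> \<and> \<xi> < a \<and> \<psi> a - \<psi> 0 = (a - 0) * (Dg ((z + a *\<^sub>R v) + \<xi> *\<^sub>R w) w - Dg (z + \<xi> *\<^sub>R w) w)"
    unfolding \<psi>_def
  proof (rule MVT2[OF a(1)])
    fix x assume x: "0 \<le> x" "x \<le> a"
    have u1: "(z + a *\<^sub>R v) + x *\<^sub>R w \<in> U" using inU[OF x, of a] a by (simp add: algebra_simps)
    have u2: "z + x *\<^sub>R w \<in> U" using inU[OF x, of 0] a by simp
    show "((\<lambda>\<alpha>. g ((z + a *\<^sub>R v) + \<alpha> *\<^sub>R w) - g (z + \<alpha> *\<^sub>R w)) has_real_derivative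
           (Dg ((z + a *\<^sub>R v) + x *\<^sub>R w) w - Dg (z + x *\<^sub>R w) w)) (at x)"
      by (intro DERIV_diff line_deriv dg u1 u2)
  qed
  then obtain \<xi> where xi: "0 < \<xi>" "\<xi> < a"
    and e1: "\<psi> a - \<psi> 0 = a * (Dg ((z + a *\<^sub>R v) + \<xi> *\<^sub>R w) w - Dg (z + \<xi> *\<^sub>R w) w)" by auto
  have "\<exists>\<eta>. 0 < \<eta> \<and> \<eta> < a \<and> Dg ((z + \<xi> *\<^sub>R w) + a *\<^sub>R v) w - Dg ((z + \<xi> *\<^sub>R w) + 0 *\<^sub>R v) w
          = (a - 0) * B ((z + \<xi> *\<^sub>R w) + \<eta> *\<^sub>R v) v"
  proof (rule MVT2[OF a(1)])
    fix x assume x: "0 \<le> x" "x \<le> a"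
    have u1: "(z + \<xi> *\<^sub>R w) + x *\<^sub>R v \<in> U" using inU[of \<xi> x] x xi by simp
    show "((\<lambda>\<beta>. Dg ((z + \<xi> *\<^sub>R w) + \<beta> *\<^sub>R v) w) has_real_derivative B ((z + \<xi> *\<^sub>R w) + x *\<^sub>R v) v) (at x)"
      by (intro line_deriv dw u1)
  qed
  then obtain \<eta> where eta: "0 < \<eta>" "\<eta> < a"
    and e2: "Dg ((z + \<xi> *\<^sub>R w) + a *\<^sub>R v) w - Dg ((z + \<xi> *\<^sub>R w) + 0 *\<^sub>R v) w
          = a * B ((z + \<xi> *\<^sub>R w) + \<eta> *\<^sub>R v) v" by auto
  define p where "p = (z + \<xi> *\<^sub>R w) + \<eta> *\<^sub>R v"
  have eqn: "(z + a *\<^sub>R v) + \<xi> *\<^sub>R w = (z + \<xi> *\<^sub>R w) + a *\<^sub>R v" by (simp add: algebra_simps)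
  have "\<psi> a - \<psi> 0 = a * a * B p v" using e1[unfolded eqn] e2 by (simp add: p_def)
  moreover have "\<psi> a - \<psi> 0 = g (z + a *\<^sub>R v + a *\<^sub>R w) - g (z + a *\<^sub>R v) - g (z + a *\<^sub>R w) + g z"
    by (simp add: \<psi>_def algebra_simps)
  moreover have "dist z p \<le> a * (norm v + norm w)"
  proof -
    have "dist z p = norm (\<xi> *\<^sub>R w + \<eta> *\<^sub>R v)"
      by (simp add: p_def dist_norm algebra_simps norm_minus_commute)
    also have "\<dots> \<le> \<xi> * norm w + \<eta> * norm v"
      using norm_triangle_ineq[of "\<xi> *\<^sub>R w" "\<eta> *\<^sub>R v"] xi eta by simp
    also have "\<dots> \<le> a * norm w + a * norm v"
      using xi eta by (intro add_mono mult_right_mono) auto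
    finally show ?thesis by (simp add: algebra_simps)
  qed
  ultimately show ?thesis by metis
qed

lemma clairaut:
  fixes g :: "'a::real_normed_vector \<Rightarrow> real"
  assumes U: "open U" "z \<in> U"
  and dg: "\<And>y. y \<in> U \<Longrightarrow> (g has_derivative Dg y) (at y)"
  and dv: "\<And>y. y \<in> U \<Longrightarrow> ((\<lambda>y. Dg y v) has_derivative A y) (at y)"
  and dw: "\<And>y. y \<in> U \<Longrightarrow> ((\<lambda>y. Dg y w) has_derivative B y) (at y)"
  and cA: "continuous_on U (\<lambda>y. A y w)" and cB: "continuous_on U (\<lambda>y. B y v)"
  shows "A z w = B z v"
proof (rule ccontr)
  assume ne: "A z w \<noteq> B z v"
  define d where "d = \<bar>A z w - B z v\<bar> / 2"
  have d: "d > 0" using ne by (simp add: d_def)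
  obtain r where r: "r > 0" "ball z r \<subseteq> U" using U open_contains_ball by blast
  obtain d1 where d1: "d1 > 0" "\<And>y. y \<in> U \<Longrightarrow> dist y z < d1 \<Longrightarrow> dist (A y w) (A z w) < d"
    using cA U d unfolding continuous_on_iff by metis
  obtain d2 where d2: "d2 > 0" "\<And>y. y \<in> U \<Longrightarrow> dist y z < d2 \<Longrightarrow> dist (B y v) (B z v) < d"
    using cB U d unfolding continuous_on_iff by metis
  define m where "m = min r (min d1 d2)"
  have m: "m > 0" using r d1 d2 by (simp add: m_def)
  define a where "a = m / (2 * (norm v + norm w + 1))"
  have pos: "norm v + norm w + 1 > 0" by (smt (verit) norm_ge_zero)
  have "2 * (norm v + norm w + 1) > 0" using pos by simp
  then have a: "a > 0" using m unfolding a_def by (rule divide_pos_pos[rotated])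
  have am: "a * (norm v + norm w) < m"
  proof -
    have "a * (norm v + norm w) \<le> a * (norm v + norm w + 1)" using a by simp
    also have "\<dots> = m / 2" using pos by (simp add: a_def field_simps)
    finally show ?thesis using m by simp
  qed
  obtain p where p: "dist z p \<le> a * (norm v + norm w)"
    and ep: "g (z + a *\<^sub>R v + a *\<^sub>R w) - g (z + a *\<^sub>R v) - g (z + a *\<^sub>R w) + g z = a * a * B p v"
    using clairaut_half[OF r(2) dg dw a] am by (auto simp: m_def)
  obtain q where q: "dist z q \<le> a * (norm w + norm v)"
    and eq: "g (z + a *\<^sub>R w + a *\<^sub>R v) - g (z + a *\<^sub>R w) - g (z + a *\<^sub>R v) + g z = a * a * A q w"
    using clairaut_half[OF r(2) dg dv a(1), of w] am by (auto simp: m_def add.commute)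
  have "a * a * B p v = a * a * A q w" using ep eq by (simp add: algebra_simps)
  then have pq: "B p v = A q w" using a by simp
  have pU: "p \<in> U" "dist p z < d2" using p am r unfolding m_def by (auto simp: dist_commute)
  have qU: "q \<in> U" "dist q z < d1" using q am r unfolding m_def by (auto simp: dist_commute add.commute)
  have "\<bar>A z w - B z v\<bar> \<le> \<bar>A q w - A z w\<bar> + \<bar>B p v - B z v\<bar>" using pq by linarith
  also have "\<dots> < d + d" using d1(2)[OF qU] d2(2)[OF pU] by (simp add: dist_real_def)
  finally show False by (simp add: d_def)
qed

lemma bb_mm: "bounded_bilinear ((**) :: real^'n^'m \<Rightarrow> real^'p^'n \<Rightarrow> real^'p^'m)"
proof -
  have "bilinear ((**) :: real^'n^'m \<Rightarrow> real^'p^'n \<Rightarrow> real^'p^'m)"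
    unfolding bilinear_def
    by (auto intro!: linearI simp: matrix_matrix_mult_def vec_eq_iff sum.distrib distrib_left distrib_right sum_distrib_left mult_ac)
  then show ?thesis using bilinear_conv_bounded_bilinear by blast
qed

lemma hvd_vec:
  fixes f :: "real \<Rightarrow> 'a::real_normed_vector^'n"
  assumes "\<And>i. ((\<lambda>\<tau>. f \<tau> $ i) has_vector_derivative f' $ i) (at t within S)"
  shows "(f has_vector_derivative f') (at t within S)"
  using assms unfolding has_vector_derivative_def has_derivative_within
  by (auto intro!: vec_tendstoI bounded_linear_scaleR_left)

lemma hvd_mat:
  fixes f :: "real \<Rightarrow> 'a::real_normed_vector^'n^'m"
  assumes "\<And>i j. ((\<lambda>\<tau>. f \<tau> $ i $ j) has_vector_derivative f' $ i $ j) (at t within S)"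
  shows "(f has_vector_derivative f') (at t within S)"
  using assms by (intro hvd_vec) auto

lemma hvd_quot:
  fixes f :: "real \<Rightarrow> 'a::real_normed_vector"
  shows "(f has_vector_derivative D) (at x within S) \<longleftrightarrow> ((\<lambda>y. (f y - f x) /\<^sub>R (y - x)) \<longlongrightarrow> D) (at x within S)"
proof -
  have eq: "norm ((1 / norm (y - x)) *\<^sub>R (f y - (f x + (y - x) *\<^sub>R D))) = norm ((f y - f x) /\<^sub>R (y - x) - D)"
    if "y \<noteq> x" for y
  proof -
    have "(1 / (y - x)) *\<^sub>R (f y - (f x + (y - x) *\<^sub>R D)) = (1 / (y - x)) *\<^sub>R (f y - f x) - (1 / (y - x)) *\<^sub>R ((y - x) *\<^sub>R D)"
      by (simp only: diff_diff_add[symmetric] scaleR_diff_right)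
    also have "\<dots> = (f y - f x) /\<^sub>R (y - x) - D" using that by (simp add: divide_inverse)
    finally have "(f y - f x) /\<^sub>R (y - x) - D = (1 / (y - x)) *\<^sub>R (f y - (f x + (y - x) *\<^sub>R D))" by simp
    then show ?thesis by simp
  qed
  have "(f has_vector_derivative D) (at x within S) \<longleftrightarrow>
     ((\<lambda>y. norm ((1 / norm (y - x)) *\<^sub>R (f y - (f x + (y - x) *\<^sub>R D)))) \<longlongrightarrow> 0) (at x within S)"
    unfolding has_vector_derivative_def has_derivative_within tendsto_norm_zero_iff
    by (simp add: bounded_linear_scaleR_left)
  also have "\<dots> \<longleftrightarrow> ((\<lambda>y. norm ((f y - f x) /\<^sub>R (y - x) - D)) \<longlongrightarrow> 0) (at x within S)"
    by (rule Lim_cong_within) (use eq in auto)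
  also have "\<dots> \<longleftrightarrow> ((\<lambda>y. (f y - f x) /\<^sub>R (y - x)) \<longlongrightarrow> D) (at x within S)"
    unfolding tendsto_norm_zero_iff LIM_zero_iff ..
  finally show ?thesis .
qed

lemma tendsto_det:
  fixes M :: "'a \<Rightarrow> real^'n^'n"
  assumes "(M \<longlongrightarrow> A) F"
  shows "((\<lambda>x. det (M x)) \<longlongrightarrow> det A) F"
  unfolding det_def by (intro tendsto_intros assms)

lemma matrix_inv_props:
  fixes A :: "real^'n^'n"
  assumes "invertible A"
  shows "A ** matrix_inv A = mat 1" "matrix_inv A ** A = mat 1"
proof -
  have "\<exists>A'. A ** A' = mat 1 \<and> A' ** A = mat 1" using assms invertible_def by blast
  then have "A ** matrix_inv A = mat 1 \<and> matrix_inv A ** A = mat 1"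
    unfolding matrix_inv_def by (rule someI_ex)
  then show "A ** matrix_inv A = mat 1" "matrix_inv A ** A = mat 1" by auto
qed

lemma mat_axis_component: "((A::real^'n^'m) *v axis j 1) $ i = A $ i $ j"
  by (simp add: matrix_vector_mult_basis column_def)

lemma matrix_inv_entry:
  fixes A :: "real^'n^'n"
  assumes "invertible A"
  shows "matrix_inv A $ i $ j = det (\<chi> a b. if b = i then axis j 1 $ a else A $ a $ b) / det A"
proof -
  have d: "det A \<noteq> 0" using assms invertible_det_nz by blast
  have "A *v (matrix_inv A *v axis j 1) = axis j 1"
    by (simp add: matrix_vector_mul_assoc matrix_inv_props[OF assms])
  then have "matrix_inv A *v axis j 1 = (\<chi> k. det(\<chi> i l. if l = k then axis j 1 $ i else A $ i $ l) / det A)"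
    using cramer[OF d] by blast
  then have "(matrix_inv A *v axis j 1) $ i = det (\<chi> a b. if b = i then axis j 1 $ a else A $ a $ b) / det A"
    by simp
  then show ?thesis by (simp add: mat_axis_component)
qed

lemma inv_cont:
  fixes P :: "real \<Rightarrow> real^'n^'n"
  assumes "continuous (at t within S) P" "\<forall>\<tau>\<in>S. invertible (P \<tau>)" "t \<in> S"
  shows "continuous (at t within S) (\<lambda>\<tau>. matrix_inv (P \<tau>))"
  unfolding continuous_within
proof (intro vec_tendstoI)
  fix i j
  have Pt: "(P \<longlongrightarrow> P t) (at t within S)" using assms(1) continuous_within by blast
  have Pab: "\<And>a b. ((\<lambda>x. P x $ a $ b) \<longlongrightarrow> P t $ a $ b) (at t within S)"
    using tendsto_vec_nth[OF tendsto_vec_nth[OF Pt]] by simp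
  define R where "R \<tau> = det (\<chi> a b. if b = j then axis i 1 $ a else P \<tau> $ a $ b) / det (P \<tau>)" for \<tau>
  have RL: "(R \<longlongrightarrow> R t) (at t within S)"
    unfolding R_def using assms invertible_det_nz
    by (intro tendsto_intros tendsto_det Pab) (auto intro: Pab Pt)
  have eqR: "\<And>\<tau>. \<tau> \<in> S \<Longrightarrow> matrix_inv (P \<tau>) $ j $ i = R \<tau>"
    using assms(2) by (simp add: R_def matrix_inv_entry)
  have "((\<lambda>\<tau>. matrix_inv (P \<tau>) $ j $ i) \<longlongrightarrow> R t) (at t within S) \<longleftrightarrow> (R \<longlongrightarrow> R t) (at t within S)"
    by (rule Lim_cong_within) (auto simp: eqR)
  then show "((\<lambda>\<tau>. matrix_inv (P \<tau>) $ j $ i) \<longlongrightarrow> matrix_inv (P t) $ j $ i) (at t within S)"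
    using RL eqR[OF assms(3)] by simp
qed

lemma inv_deriv:
  fixes P :: "real \<Rightarrow> real^'n^'n"
  assumes d: "(P has_vector_derivative P') (at t within S)" and inv: "\<forall>\<tau>\<in>S. invertible (P \<tau>)"
    and t: "t \<in> S"
  shows "((\<lambda>\<tau>. matrix_inv (P \<tau>)) has_vector_derivative - (matrix_inv (P t) ** P' ** matrix_inv (P t))) (at t within S)"
proof -
  let ?Pi = "\<lambda>\<tau>. matrix_inv (P \<tau>)"
  have c: "(?Pi \<longlongrightarrow> ?Pi t) (at t within S)"
    using inv_cont[OF has_vector_derivative_continuous[OF d] inv t] continuous_within by blast
  have q: "((\<lambda>y. (P y - P t) /\<^sub>R (y - t)) \<longlongrightarrow> P') (at t within S)" using d hvd_quot by blast
  have lim: "((\<lambda>y. - (?Pi y ** ((P y - P t) /\<^sub>R (y - t)) ** ?Pi t)) \<longlongrightarrow> - (?Pi t ** P' ** ?Pi t)) (at t within S)"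
    by (intro tendsto_minus bounded_bilinear.tendsto[OF bb_mm] c q tendsto_const)
  have eq: "(?Pi y - ?Pi t) /\<^sub>R (y - t) = - (?Pi y ** ((P y - P t) /\<^sub>R (y - t)) ** ?Pi t)" if "y \<in> S" for y
  proof -
    have iy: "P y ** ?Pi y = mat 1" "?Pi y ** P y = mat 1" using matrix_inv_props inv that by auto
    have it: "P t ** ?Pi t = mat 1" "?Pi t ** P t = mat 1" using matrix_inv_props inv t by auto
    have "?Pi y ** (P t - P y) ** ?Pi t = (?Pi y ** P t - ?Pi y ** P y) ** ?Pi t"
      by (simp add: bounded_bilinear.diff_right[OF bb_mm])
    also have "\<dots> = (?Pi y ** P t) ** ?Pi t - (?Pi y ** P y) ** ?Pi t"
      by (simp add: bounded_bilinear.diff_left[OF bb_mm])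
    also have "\<dots> = ?Pi y - ?Pi t"
      by (simp add: iy it flip: matrix_mul_assoc)
    finally have e: "?Pi y - ?Pi t = ?Pi y ** (P t - P y) ** ?Pi t" by simp
    have m: "P t - P y = - (P y - P t)" by simp
    show ?thesis unfolding e
      by (simp only: m bounded_bilinear.minus_right[OF bb_mm] bounded_bilinear.minus_left[OF bb_mm] scaleR_minus_right bounded_bilinear.scaleR_right[OF bb_mm] bounded_bilinear.scaleR_left[OF bb_mm])
  qed
  have "((\<lambda>y. (?Pi y - ?Pi t) /\<^sub>R (y - t)) \<longlongrightarrow> - (?Pi t ** P' ** ?Pi t)) (at t within S) \<longleftrightarrow>
        ((\<lambda>y. - (?Pi y ** ((P y - P t) /\<^sub>R (y - t)) ** ?Pi t)) \<longlongrightarrow> - (?Pi t ** P' ** ?Pi t)) (at t within S)"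
    by (rule Lim_cong_within) (auto simp: eq)
  then show ?thesis unfolding hvd_quot using lim by blast
qed

lemma bl_transpose: "bounded_linear (transpose :: real^'n^'m \<Rightarrow> real^'m^'n)"
proof -
  have "linear (transpose :: real^'n^'m \<Rightarrow> real^'m^'n)"
    by (rule linearI) (auto simp: transpose_def vec_eq_iff)
  then show ?thesis using linear_conv_bounded_linear by blast
qed

lemma matrix_inv_unique:
  fixes A B :: "real^'n^'n"
  assumes "A ** B = mat 1"
  shows "matrix_inv A = B"
proof -
  have BA: "B ** A = mat 1" using assms matrix_left_right_inverse by blast
  then have "invertible A" using assms invertible_def by blast
  then have "matrix_inv A = matrix_inv A ** (A ** B)" using assms by simp
  also have "\<dots> = B" by (simp add: matrix_mul_assoc matrix_inv_props[OF \<open>invertible A\<close>])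
  finally show ?thesis .
qed

lemma inner_mat: "x \<bullet> ((A::real^'n^'m) *v y) = (transpose A *v x) \<bullet> y"
  by (metis dot_lmul_matrix transpose_matrix_vector)

lemma pos_def_invertible:
  fixes A :: "real^'n^'n"
  assumes "pos_def A" shows "invertible A"
proof -
  have "\<forall>x. A *v x = 0 \<longrightarrow> x = 0"
  proof (intro allI impI)
    fix x assume "A *v x = 0"
    then show "x = 0" using assms unfolding pos_def_def by force
  qed
  then show ?thesis using matrix_left_invertible_ker invertible_left_inverse by blast
qed

lemma transpose_add: "transpose (A + B) = transpose A + transpose (B::real^'n^'m)"
  by (simp add: transpose_def vec_eq_iff)
lemma transpose_diff: "transpose (A - B) = transpose A - transpose (B::real^'n^'m)"
  by (simp add: transpose_def vec_eq_iff)
lemma transpose_minus: "transpose (- A) = - transpose (A::real^'n^'m)"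
  by (simp add: transpose_def vec_eq_iff)

lemmas mm_simps = bounded_bilinear.add_left[OF bb_mm] bounded_bilinear.add_right[OF bb_mm]
  bounded_bilinear.diff_left[OF bb_mm] bounded_bilinear.diff_right[OF bb_mm]
  bounded_bilinear.minus_left[OF bb_mm] bounded_bilinear.minus_right[OF bb_mm]
  bounded_bilinear.scaleR_left[OF bb_mm] bounded_bilinear.scaleR_right[OF bb_mm]
  transpose_add transpose_diff transpose_minus transpose_scalar matrix_transpose_mul
  matrix_mul_assoc

lemma jd_algebra:
  fixes G Gi F Q' P' Jd0 M Jt :: "real^'n^'n" and Ri :: "real^'m^'m" and Hm :: "real^'n^'m"
  assumes GGi: "G ** Gi = mat 1" and GiG: "Gi ** G = mat 1"
    and Jt: "Jt = transpose G ** Jd0 ** G" and P': "P' = Q' + F ** G"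
    and M: "transpose G ** M ** G = - (c *\<^sub>R Jt) + c *\<^sub>R (transpose (Hm ** G) ** Ri ** (Hm ** G))"
  shows "(transpose Gi ** Jt) ** (- (Gi ** P' ** Gi)) + (transpose Gi ** ((transpose G ** Jd0) ** Q' + (transpose G ** M + transpose Q' ** Jd0) ** G) + transpose (- (Gi ** P' ** Gi)) ** Jt) ** Gi
     = - (transpose F ** Jd0) - Jd0 ** F - c *\<^sub>R Jd0 + c *\<^sub>R (transpose Hm ** Ri ** Hm)"
proof -
  have c1: "\<And>X :: real^'n^'k. X ** G ** Gi = X" using GGi by (metis matrix_mul_assoc matrix_mul_rid)
  have c2: "\<And>X :: real^'n^'k. X ** Gi ** G = X" using GiG by (metis matrix_mul_assoc matrix_mul_rid)
  have tGGi: "transpose Gi ** transpose G = mat 1" using GGi by (metis matrix_transpose_mul transpose_mat)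
  have tGiG: "transpose G ** transpose Gi = mat 1" using GiG by (metis matrix_transpose_mul transpose_mat)
  have c3: "\<And>X :: real^'n^'k. X ** transpose Gi ** transpose G = X" using tGGi by (metis matrix_mul_assoc matrix_mul_rid)
  have c4: "\<And>X :: real^'n^'k. X ** transpose G ** transpose Gi = X" using tGiG by (metis matrix_mul_assoc matrix_mul_rid)
  have Meq: "M = transpose Gi ** (transpose G ** M ** G) ** Gi"
    by (simp add: matrix_mul_assoc tGGi c1)
  have "transpose Gi ** (transpose G ** M ** G) ** Gi = - (c *\<^sub>R Jd0) + c *\<^sub>R (transpose Hm ** Ri ** Hm)"
    unfolding M Jt by (simp add: mm_simps GGi GiG tGGi tGiG c1 c2 c3 c4)
  then have Meq2: "M = - (c *\<^sub>R Jd0) + c *\<^sub>R (transpose Hm ** Ri ** Hm)" using Meq by simp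
  show ?thesis
    unfolding Meq2 Jt P' by (simp add: mm_simps GGi GiG tGGi tGiG c1 c2 c3 c4 algebra_simps)
qed

lemma T0_case:
  fixes F :: "real \<Rightarrow> 'a::real_normed_vector"
  shows "(F has_vector_derivative D) (at t within {t})"
  unfolding has_vector_derivative_def
  by (simp add: at_within_def bounded_linear_scaleR_left has_derivative_bot)

theorem corollary25:
  fixes T :: real
    and Theta :: "(real^'n) set"
    and s :: "real \<Rightarrow> real^'n \<Rightarrow> real^'n"
    and f :: "real \<Rightarrow> real^'n \<Rightarrow> real^'n"
    and h :: "real^'n \<Rightarrow> 'u \<Rightarrow> real^'m"
    and u :: "real \<Rightarrow> 'u"
    and R :: "real \<Rightarrow> real^'m^'m"
    and y :: "real \<Rightarrow> real^'m"
    and eta gamma :: "real \<Rightarrow> real"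
    and th :: "real \<Rightarrow> real^'n"
    and J :: "real \<Rightarrow> real^'n^'n"
  assumes "open Theta"
    and s_smooth: "\<exists>U. {0..T} \<times> Theta \<subseteq> U \<and> smooth_on U (\<lambda>(t, x). s t x)"
    and s_ode: "\<forall>t\<in>{0..T}. \<forall>x\<in>Theta.
                  ((\<lambda>\<tau>. s \<tau> x) has_vector_derivative f t (s t x)) (at t within {0..T})"
    and f_smooth: "\<forall>t. smooth_on UNIV (f t)"
    and h_smooth: "\<forall>v. smooth_on UNIV (\<lambda>x. h x v)"
    and R_cov: "\<forall>t\<in>{0..T}. pos_semidef (R t) \<and> invertible (R t)"
    and G_inv: "\<forall>t\<in>{0..T}. \<forall>x\<in>Theta. invertible (jacobian (s t) x)"
    and y_smooth: "\<exists>V. {0..T} \<subseteq> V \<and> smooth_on V y"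
    and ong: "ong_solution T Theta eta gamma (obs_loglik_rate s h u R y)
                (obs_fisher_rate s h u R) s th J"
  shows "let G = (\<lambda>t. jacobian (s t) (th t));
             F = (\<lambda>t. jacobian (f t) (s t (th t)));
             H = (\<lambda>t. jacobian (\<lambda>x. h x (u t)) (s t (th t)));
             Jd = (\<lambda>t. transpose (matrix_inv (G t)) ** J t ** matrix_inv (G t));
             innov = (\<lambda>t. matrix_inv (Jd t) *v (transpose (H t) *v
                            (matrix_inv (R t) *v (y t - h (s t (th t)) (u t)))))
         in (\<forall>t\<in>{0..T}.
               (Jd has_vector_derivative
                  (- (transpose (F t) ** Jd t) - Jd t ** F t - gamma t *\<^sub>R Jd t
                   + gamma t *\<^sub>R (transpose (H t) ** matrix_inv (R t) ** H t)))
                 (at t within {0..T})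
             \<and> (th has_vector_derivative (eta t *\<^sub>R (matrix_inv (G t) *v innov t)))
                 (at t within {0..T})
             \<and> ((\<lambda>t. s t (th t)) has_vector_derivative (f t (s t (th t)) + eta t *\<^sub>R innov t))
                 (at t within {0..T}))
            \<and> Jd 0 = transpose (matrix_inv (G 0)) ** J 0 ** matrix_inv (G 0)"
proof -
  obtain U where U: "{0..T} \<times> Theta \<subseteq> U" "smooth_on U (\<lambda>(t, x). s t x)" using s_smooth by blast
  define g where "g = (\<lambda>(t, x). s t x)"
  have gapp: "\<And>a b. g (a, b) = s a b" by (simp add: g_def)
  have oU: "open U" using U(2) smooth_on_def by blast
  have h2: "hdiff_on 2 U g" using U(2) smooth_on_def g_def by blast
  define Dg where "Dg z = frechet_derivative g (at z)" for z
  define D2 where "D2 w z = frechet_derivative (\<lambda>z. Dg z w) (at z)" for w z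
  have h2': "(\<forall>x\<in>U. g differentiable at x) \<and> (\<forall>v. (\<forall>x\<in>U. (\<lambda>x. Dg x v) differentiable at x)
      \<and> (\<forall>v'. continuous_on U (\<lambda>x. D2 v x v')))"
    using h2 unfolding numeral_2_eq_2 hdiff_on.simps Dg_def D2_def by blast
  have dg: "\<And>z. z \<in> U \<Longrightarrow> (g has_derivative Dg z) (at z)"
    using h2' by (simp add: Dg_def frechet_derivative_works)
  have d2: "\<And>w z. z \<in> U \<Longrightarrow> ((\<lambda>z. Dg z w) has_derivative D2 w z) (at z)"
    using h2' unfolding D2_def by (meson frechet_derivative_works)
  have c2: "\<And>w w'. continuous_on U (\<lambda>z. D2 w z w')"
    using h2' by blast
  have blDg: "\<And>z. z \<in> U \<Longrightarrow> linear (Dg z)"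
    using dg has_derivative_bounded_linear bounded_linear.linear by blast
  have blD2: "\<And>w z. z \<in> U \<Longrightarrow> linear (D2 w z)"
    using d2 has_derivative_bounded_linear bounded_linear.linear by blast
  have sym: "\<And>z v. z \<in> U \<Longrightarrow> D2 (0, v) z (1, 0) = D2 (1, 0) z (0, v)"
  proof -
    fix z v assume z: "z \<in> U"
    show "D2 (0, v) z (1, 0) = D2 (1, 0) z (0, v)"
    unfolding vec_eq_iff
    proof
      fix i
      show "D2 (0, v) z (1, 0) $ i = D2 (1, 0) z (0, v) $ i"
      proof (rule clairaut[OF oU z, where g = "\<lambda>z. g z $ i" and Dg = "\<lambda>y h. Dg y h $ i"])
        show "((\<lambda>z. g z $ i) has_derivative (\<lambda>h. Dg y h $ i)) (at y)" if "y \<in> U" for y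
          using bounded_linear.has_derivative[OF bounded_linear_vec_nth dg[OF that]] .
        show "((\<lambda>y. Dg y (0, v) $ i) has_derivative (\<lambda>h. D2 (0, v) y h $ i)) (at y)" if "y \<in> U" for y
          using bounded_linear.has_derivative[OF bounded_linear_vec_nth d2[OF that]] .
        show "((\<lambda>y. Dg y (1, 0) $ i) has_derivative (\<lambda>h. D2 (1, 0) y h $ i)) (at y)" if "y \<in> U" for y
          using bounded_linear.has_derivative[OF bounded_linear_vec_nth d2[OF that]] .
        show "continuous_on U (\<lambda>y. D2 (0, v) y (1, 0) $ i)"
          by (intro continuous_on_component c2)
        show "continuous_on U (\<lambda>y. D2 (1, 0) y (0, v) $ i)"
          by (intro continuous_on_component c2)
      qed
    qed
  qed
  have dx: "\<And>\<tau> x. (\<tau>, x) \<in> U \<Longrightarrow> (s \<tau> has_derivative (\<lambda>v. Dg (\<tau>, x) (0, v))) (at x)"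
  proof -
    fix \<tau> x assume z: "(\<tau>, x) \<in> U"
    have "((\<lambda>x. (\<tau>, x)) has_derivative (\<lambda>v. (0, v))) (at x)"
      by (auto intro!: derivative_eq_intros)
    from has_derivative_compose[OF this dg[OF z]]
    show "(s \<tau> has_derivative (\<lambda>v. Dg (\<tau>, x) (0, v))) (at x)" by (simp add: gapp)
  qed
  have jacv: "\<And>\<tau> x v. (\<tau>, x) \<in> U \<Longrightarrow> jacobian (s \<tau>) x *v v = Dg (\<tau>, x) (0, v)"
  proof -
    fix \<tau> x v assume z: "(\<tau>, x) \<in> U"
    have "jacobian (s \<tau>) x = matrix (\<lambda>v. Dg (\<tau>, x) (0, v))"
      unfolding jacobian_def using frechet_derivative_at[OF dx[OF z]] by simp
    moreover have "bounded_linear (\<lambda>v. Dg (\<tau>, x) (0, v))" using dx[OF z] has_derivative_bounded_linear by blast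
    ultimately show "jacobian (s \<tau>) x *v v = Dg (\<tau>, x) (0, v)"
      using matrix_vector_mul(3) by metis
  qed
  have jacij: "\<And>\<tau> x i j. (\<tau>, x) \<in> U \<Longrightarrow> jacobian (s \<tau>) x $ i $ j = Dg (\<tau>, x) (0, axis j 1) $ i"
    by (metis jacv mat_axis_component)
  have dt: "\<And>\<tau> x. (\<tau>, x) \<in> U \<Longrightarrow> ((\<lambda>\<tau>. s \<tau> x) has_vector_derivative Dg (\<tau>, x) (1, 0)) (at \<tau>)"
  proof -
    fix \<tau> x assume z: "(\<tau>, x) \<in> U"
    have "((\<lambda>\<tau>. (\<tau>, x)) has_derivative (\<lambda>h. (h, 0))) (at \<tau>)"
      by (auto intro!: derivative_eq_intros)
    from has_derivative_compose[OF this dg[OF z]]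
    have "((\<lambda>\<tau>. s \<tau> x) has_derivative (\<lambda>h. Dg (\<tau>, x) (h, 0))) (at \<tau>)" by (simp add: gapp)
    moreover have "(\<lambda>h. Dg (\<tau>, x) (h, 0)) = (\<lambda>h. h *\<^sub>R Dg (\<tau>, x) (1, 0))"
    proof
      fix h :: real
      have "(h, 0::real^'n) = h *\<^sub>R (1, 0)" by simp
      then show "Dg (\<tau>, x) (h, 0) = h *\<^sub>R Dg (\<tau>, x) (1, 0)"
        using linear_scale[OF blDg[OF z]] by metis
    qed
    ultimately show "((\<lambda>\<tau>. s \<tau> x) has_vector_derivative Dg (\<tau>, x) (1, 0)) (at \<tau>)"
      by (simp add: has_vector_derivative_def)
  qed
  show ?thesis unfolding Let_def
  proof (rule conjI[OF ballI])
    fix t assume t: "t \<in> {0..T}"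
    show "((\<lambda>t. transpose (matrix_inv (jacobian (s t) (th t))) ** J t ** matrix_inv (jacobian (s t) (th t))) has_vector_derivative
     - (transpose (jacobian (f t) (s t (th t))) **
        (transpose (matrix_inv (jacobian (s t) (th t))) ** J t ** matrix_inv (jacobian (s t) (th t)))) -
     transpose (matrix_inv (jacobian (s t) (th t))) ** J t ** matrix_inv (jacobian (s t) (th t)) ** jacobian (f t) (s t (th t)) -
     gamma t *\<^sub>R (transpose (matrix_inv (jacobian (s t) (th t))) ** J t ** matrix_inv (jacobian (s t) (th t))) +
     gamma t *\<^sub>R (transpose (jacobian (\<lambda>x. h x (u t)) (s t (th t))) ** matrix_inv (R t) ** jacobian (\<lambda>x. h x (u t)) (s t (th t))))
     (at t within {0..T}) \<and>
    (th has_vector_derivative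
     eta t *\<^sub>R
     (matrix_inv (jacobian (s t) (th t)) *v
      (matrix_inv (transpose (matrix_inv (jacobian (s t) (th t))) ** J t ** matrix_inv (jacobian (s t) (th t))) *v
       (transpose (jacobian (\<lambda>x. h x (u t)) (s t (th t))) *v (matrix_inv (R t) *v (y t - h (s t (th t)) (u t)))))))
     (at t within {0..T}) \<and>
    ((\<lambda>t. s t (th t)) has_vector_derivative
     f t (s t (th t)) +
     eta t *\<^sub>R
     (matrix_inv (transpose (matrix_inv (jacobian (s t) (th t))) ** J t ** matrix_inv (jacobian (s t) (th t))) *v
      (transpose (jacobian (\<lambda>x. h x (u t)) (s t (th t))) *v (matrix_inv (R t) *v (y t - h (s t (th t)) (u t))))))
     (at t within {0..T})"
    proof (cases "T = 0")
      case True
      then have e: "{0..T} = {t}" using t by auto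
      show ?thesis unfolding e by (intro conjI T0_case)
    next
      case False
      then have T: "T > 0" using t by auto
      define S where "S = {0..T}"
      have tS: "t \<in> S" using t S_def by simp
      have ongS: "\<And>\<tau>. \<tau> \<in> S \<Longrightarrow> th \<tau> \<in> Theta \<and> pos_def (J \<tau>) \<and>
          has_cov_deriv (s \<tau>) th J (- (gamma \<tau> *\<^sub>R J \<tau>) + gamma \<tau> *\<^sub>R obs_fisher_rate s h u R \<tau> (th \<tau>)) \<tau> S \<and>
          (th has_vector_derivative (eta \<tau> *\<^sub>R (matrix_inv (J \<tau>) *v grad (obs_loglik_rate s h u R y \<tau>) (th \<tau>)))) (at \<tau> within S)"
        using ong unfolding ong_solution_def S_def by blast
      have thT: "\<And>\<tau>. \<tau> \<in> S \<Longrightarrow> th \<tau> \<in> Theta" using ongS by blast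
      have zU: "\<And>\<tau> x. \<tau> \<in> S \<Longrightarrow> x \<in> Theta \<Longrightarrow> (\<tau>, x) \<in> U" using U(1) S_def by auto
      have ode: "\<And>\<tau> x. \<tau> \<in> S \<Longrightarrow> x \<in> Theta \<Longrightarrow> Dg (\<tau>, x) (1, 0) = f \<tau> (s \<tau> x)"
      proof -
        fix \<tau> x assume a: "\<tau> \<in> S" "x \<in> Theta"
        have d1: "((\<lambda>\<tau>. s \<tau> x) has_vector_derivative Dg (\<tau>, x) (1, 0)) (at \<tau> within cbox 0 T)"
          using dt[OF zU[OF a]] has_vector_derivative_at_within by blast
        have d2': "((\<lambda>\<tau>. s \<tau> x) has_vector_derivative f \<tau> (s \<tau> x)) (at \<tau> within cbox 0 T)"
          using s_ode a unfolding S_def cbox_interval by blast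
        show "Dg (\<tau>, x) (1, 0) = f \<tau> (s \<tau> x)"
          using vector_derivative_unique_within_closed_interval[OF T _ d1 d2'] a unfolding S_def cbox_interval by blast
      qed
      define x0 where "x0 = th t"
      define z where "z = (t, x0)"
      have x0T: "x0 \<in> Theta" using thT tS x0_def by simp
      have zU0: "z \<in> U" using zU[OF tS x0T] z_def by simp
      have zU0': "(t, th t) \<in> U" using zU0 z_def x0_def by simp
      define G where "G = jacobian (s t) x0"
      define F where "F = jacobian (f t) (s t x0)"
      define Hm where "Hm = jacobian (\<lambda>x. h x (u t)) (s t x0)"
      define Ri where "Ri = matrix_inv (R t)"
      define th' where "th' = eta t *\<^sub>R (matrix_inv (J t) *v grad (obs_loglik_rate s h u R y t) x0)"
      have hth: "(th has_vector_derivative th') (at t within S)" using ongS[OF tS] th'_def x0_def by simp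
      have Gv: "\<And>v. G *v v = Dg z (0, v)" using jacv zU0 by (simp add: G_def z_def)
      have fdiff: "\<And>p. f t differentiable at p"
      proof -
        fix p
        have "hdiff_on (Suc 0) UNIV (f t)" using f_smooth unfolding smooth_on_def by blast
        then show "f t differentiable at p" by simp
      qed
      define Df where "Df = frechet_derivative (f t) (at (s t x0))"
      have dfD: "(f t has_derivative Df) (at (s t x0))" using fdiff frechet_derivative_works Df_def by blast
      have Fv: "\<And>v. F *v v = Df v"
      proof -
        have "bounded_linear Df" using dfD has_derivative_bounded_linear by blast
        then show "\<And>v. F *v v = Df v" unfolding F_def jacobian_def Df_def[symmetric]
          using matrix_vector_mul(3) by metis
      qed
      have FG: "\<And>v. D2 (1, 0) z (0, v) = F *v (G *v v)"
      proof -
        fix v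
        have "((\<lambda>x. (t, x)) has_derivative (\<lambda>v. (0, v))) (at x0)" by (auto intro!: derivative_eq_intros)
        from has_derivative_compose[OF this d2[OF zU0[unfolded z_def]]]
        have a1: "((\<lambda>x. Dg (t, x) (1, 0)) has_derivative (\<lambda>v. D2 (1, 0) z (0, v))) (at x0)"
          by (simp add: z_def)
        have a2: "((\<lambda>x. f t (s t x)) has_derivative (\<lambda>v. Df (Dg z (0, v)))) (at x0)"
          using has_derivative_compose[OF dx[OF zU0[unfolded z_def]] dfD] by (simp add: z_def)
        have a3: "((\<lambda>x. f t (s t x)) has_derivative (\<lambda>v. D2 (1, 0) z (0, v))) (at x0)"
          by (rule has_derivative_transform_within_open[OF a1 \<open>open Theta\<close> x0T]) (simp add: ode tS)
        from has_derivative_unique[OF a3 a2]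
        show "D2 (1, 0) z (0, v) = F *v (G *v v)" by (metis Fv Gv)
      qed
      define P' where "P' = (\<chi> i j. D2 (0, axis j 1) z (1, th') $ i)"
      define Q' where "Q' = (\<chi> i j. D2 (0, axis j 1) z (0, th') $ i)"
      have d2z: "\<And>w. ((\<lambda>z. Dg z w) has_derivative D2 w z) (at (t, th t))"
        using d2[OF zU0] z_def x0_def by simp
      have hP: "((\<lambda>\<tau>. jacobian (s \<tau>) (th \<tau>)) has_vector_derivative P') (at t within S)"
      proof -
        have pair: "((\<lambda>\<tau>. (\<tau>, th \<tau>)) has_derivative (\<lambda>h. (h, h *\<^sub>R th'))) (at t within S)"
          using hth unfolding has_vector_derivative_def by (auto intro!: derivative_eq_intros)
        have col: "((\<lambda>\<tau>. Dg (\<tau>, th \<tau>) (0, axis j 1)) has_vector_derivative D2 (0, axis j 1) z (1, th')) (at t within S)" for j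
        proof -
          have "((\<lambda>\<tau>. Dg (\<tau>, th \<tau>) (0, axis j 1)) has_derivative (\<lambda>h. D2 (0, axis j 1) z (h, h *\<^sub>R th'))) (at t within S)"
            using has_derivative_compose[OF pair d2z] .
          moreover have "(\<lambda>h. D2 (0, axis j 1) z (h, h *\<^sub>R th')) = (\<lambda>h. h *\<^sub>R D2 (0, axis j 1) z (1, th'))"
          proof
            fix h :: real
            have "(h, h *\<^sub>R th') = h *\<^sub>R (1, th')" by simp
            then show "D2 (0, axis j 1) z (h, h *\<^sub>R th') = h *\<^sub>R D2 (0, axis j 1) z (1, th')"
              using linear_scale[OF blD2[OF zU0]] by metis
          qed
          ultimately show ?thesis by (simp add: has_vector_derivative_def)
        qed
        have "((\<lambda>\<tau>. \<chi> i j. Dg (\<tau>, th \<tau>) (0, axis j 1) $ i) has_vector_derivative P') (at t within S)"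
          unfolding P'_def by (intro hvd_mat) (simp add: bounded_linear.has_vector_derivative[OF bounded_linear_vec_nth col])
        then show ?thesis
          by (rule has_vector_derivative_transform_within[OF _ zero_less_one tS])
             (simp add: vec_eq_iff jacij[OF zU[OF _ thT]])
      qed
      have hQ: "((\<lambda>\<tau>. jacobian (s t) (th \<tau>)) has_vector_derivative Q') (at t within S)"
      proof -
        have pair: "((\<lambda>\<tau>. (t, th \<tau>)) has_derivative (\<lambda>h. (0, h *\<^sub>R th'))) (at t within S)"
          using hth unfolding has_vector_derivative_def by (auto intro!: derivative_eq_intros)
        have col: "((\<lambda>\<tau>. Dg (t, th \<tau>) (0, axis j 1)) has_vector_derivative D2 (0, axis j 1) z (0, th')) (at t within S)" for j
        proof -
          have "((\<lambda>\<tau>. Dg (t, th \<tau>) (0, axis j 1)) has_derivative (\<lambda>h. D2 (0, axis j 1) z (0, h *\<^sub>R th'))) (at t within S)"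
            using has_derivative_compose[OF pair d2z] .
          moreover have "(\<lambda>h. D2 (0, axis j 1) z (0, h *\<^sub>R th')) = (\<lambda>h. h *\<^sub>R D2 (0, axis j 1) z (0, th'))"
          proof
            fix h :: real
            have "(0::real, h *\<^sub>R th') = h *\<^sub>R (0, th')" by simp
            then show "D2 (0, axis j 1) z (0, h *\<^sub>R th') = h *\<^sub>R D2 (0, axis j 1) z (0, th')"
              using linear_scale[OF blD2[OF zU0]] by metis
          qed
          ultimately show ?thesis by (simp add: has_vector_derivative_def)
        qed
        have "((\<lambda>\<tau>. \<chi> i j. Dg (t, th \<tau>) (0, axis j 1) $ i) has_vector_derivative Q') (at t within S)"
          unfolding Q'_def by (intro hvd_mat) (simp add: bounded_linear.has_vector_derivative[OF bounded_linear_vec_nth col])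
        then show ?thesis
          by (rule has_vector_derivative_transform_within[OF _ zero_less_one tS])
             (simp add: vec_eq_iff jacij[OF zU[OF tS thT]])
      qed
      have PQ: "P' = Q' + F ** G"
      proof -
        have "P' $ i $ j - Q' $ i $ j = (F ** G) $ i $ j" for i j
        proof -
          have "D2 (0, axis j 1) z (1, 0) = D2 (0, axis j 1) z (1, th') - D2 (0, axis j 1) z (0, th')"
            using linear_diff[OF blD2[OF zU0], of "(0, axis j 1)" "(1, th')" "(0, th')"] by simp
          then have "P' $ i $ j - Q' $ i $ j = D2 (0, axis j 1) z (1, 0) $ i"
            by (simp add: P'_def Q'_def)
          also have "\<dots> = D2 (1, 0) z (0, axis j 1) $ i" using sym[OF zU0] by simp
          also have "\<dots> = ((F ** G) *v axis j 1) $ i" by (simp add: FG matrix_vector_mul_assoc)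
          finally show ?thesis by (simp add: mat_axis_component)
        qed
        then show ?thesis by (simp add: vec_eq_iff algebra_simps)
      qed
      have Pt: "jacobian (s t) (th t) = G" by (simp add: G_def x0_def)
      have invP: "\<forall>\<tau>\<in>S. invertible (jacobian (s \<tau>) (th \<tau>))" using G_inv thT S_def by blast
      have invQ: "\<forall>\<tau>\<in>S. invertible (jacobian (s t) (th \<tau>))" using G_inv thT tS S_def by blast
      define Gi where "Gi = matrix_inv G"
      have invG: "invertible G" using invP tS Pt by metis
      have GGi: "G ** Gi = mat 1" and GiG: "Gi ** G = mat 1" using matrix_inv_props[OF invG] Gi_def by auto
      have hPi: "((\<lambda>\<tau>. matrix_inv (jacobian (s \<tau>) (th \<tau>))) has_vector_derivative - (Gi ** P' ** Gi)) (at t within S)"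
        using inv_deriv[OF hP invP tS] unfolding Pt Gi_def .
      have hdiff: "\<And>p. (\<lambda>x. h x (u t)) differentiable at p"
      proof -
        fix p
        have "hdiff_on (Suc 0) UNIV (\<lambda>x. h x (u t))" using h_smooth unfolding smooth_on_def by blast
        then show "(\<lambda>x. h x (u t)) differentiable at p" by simp
      qed
      define Dh where "Dh = frechet_derivative (\<lambda>x. h x (u t)) (at (s t x0))"
      have dhD: "((\<lambda>x. h x (u t)) has_derivative Dh) (at (s t x0))" using hdiff frechet_derivative_works Dh_def by blast
      have Hv: "\<And>v. Hm *v v = Dh v"
      proof -
        have "bounded_linear Dh" using dhD has_derivative_bounded_linear by blast
        then show "\<And>v. Hm *v v = Dh v" unfolding Hm_def jacobian_def Dh_def[symmetric]
          using matrix_vector_mul(3) by metis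
      qed
      have compk: "((\<lambda>x. h (s t x) (u t)) has_derivative (\<lambda>v. Dh (Dg z (0, v)))) (at x0)"
        using has_derivative_compose[OF dx[OF zU0[unfolded z_def]] dhD] by (simp add: z_def)
      have jacHG: "jacobian (\<lambda>x. h (s t x) (u t)) x0 = Hm ** G"
      proof -
        have bl: "bounded_linear (\<lambda>v. Dh (Dg z (0, v)))" using compk has_derivative_bounded_linear by blast
        have "jacobian (\<lambda>x. h (s t x) (u t)) x0 = matrix (\<lambda>v. Dh (Dg z (0, v)))"
          unfolding jacobian_def using frechet_derivative_at[OF compk] by simp
        also have "\<dots> = Hm ** G"
          unfolding matrix_eq
        proof
          fix v
          show "matrix (\<lambda>v. Dh (Dg z (0, v))) *v v = (Hm ** G) *v v"
            using matrix_vector_mul(3)[OF bl] by (metis Gv Hv matrix_vector_mul_assoc)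
        qed
        finally show ?thesis .
      qed
      have fisher: "obs_fisher_rate s h u R t x0 = transpose (Hm ** G) ** Ri ** (Hm ** G)"
        unfolding obs_fisher_rate_def Let_def jacHG Ri_def ..
      obtain M where hK: "((\<lambda>\<tau>. tensor_coord (jacobian (s t) (th \<tau>)) (J \<tau>)) has_vector_derivative M) (at t within S)"
        and DM: "- (gamma t *\<^sub>R J t) + gamma t *\<^sub>R obs_fisher_rate s h u R t x0 = tensor_uncoord (jacobian (s t) (th t)) M"
        using ongS[OF tS] unfolding has_cov_deriv_def x0_def by blast
      define Jd0 where "Jd0 = transpose Gi ** J t ** Gi"
      have Kt: "tensor_coord (jacobian (s t) (th t)) (J t) = Jd0" by (simp add: tensor_coord_def Pt Jd0_def Gi_def)
      have Jeq: "J \<tau> = transpose (jacobian (s t) (th \<tau>)) ** tensor_coord (jacobian (s t) (th \<tau>)) (J \<tau>) ** jacobian (s t) (th \<tau>)"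
        if "\<tau> \<in> S" for \<tau>
      proof -
        let ?Q = "jacobian (s t) (th \<tau>)"
        have iq: "matrix_inv ?Q ** ?Q = mat 1" using matrix_inv_props invQ that by blast
        then have iqt: "transpose ?Q ** transpose (matrix_inv ?Q) = mat 1" by (metis matrix_transpose_mul transpose_mat)
        have "transpose ?Q ** tensor_coord ?Q (J \<tau>) ** ?Q = (transpose ?Q ** transpose (matrix_inv ?Q)) ** J \<tau> ** (matrix_inv ?Q ** ?Q)"
          by (simp add: tensor_coord_def matrix_mul_assoc)
        then show ?thesis by (simp add: iq iqt)
      qed
      define J' where "J' = (transpose G ** Jd0) ** Q' + (transpose G ** M + transpose Q' ** Jd0) ** G"
      have hJ: "(J has_vector_derivative J') (at t within S)"
      proof -
        have hQt: "((\<lambda>\<tau>. transpose (jacobian (s t) (th \<tau>))) has_vector_derivative transpose Q') (at t within S)"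
          using bounded_linear.has_vector_derivative[OF bl_transpose hQ] .
        note X = bounded_bilinear.has_vector_derivative[OF bb_mm bounded_bilinear.has_vector_derivative[OF bb_mm hQt hK] hQ]
        have "((\<lambda>\<tau>. transpose (jacobian (s t) (th \<tau>)) ** tensor_coord (jacobian (s t) (th \<tau>)) (J \<tau>) ** jacobian (s t) (th \<tau>))
               has_vector_derivative J') (at t within S)"
          unfolding J'_def using X by (simp only: Pt Kt[unfolded Pt])
        then show ?thesis
          by (rule has_vector_derivative_transform_within[OF _ zero_less_one tS]) (metis Jeq)
      qed
      have hJd: "((\<lambda>\<tau>. transpose (matrix_inv (jacobian (s \<tau>) (th \<tau>))) ** J \<tau> ** matrix_inv (jacobian (s \<tau>) (th \<tau>)))
          has_vector_derivative (transpose Gi ** J t) ** (- (Gi ** P' ** Gi)) + (transpose Gi ** J' + transpose (- (Gi ** P' ** Gi)) ** J t) ** Gi) (at t within S)"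
        using bounded_bilinear.has_vector_derivative[OF bb_mm bounded_bilinear.has_vector_derivative[OF bb_mm
               bounded_linear.has_vector_derivative[OF bl_transpose hPi] hJ] hPi]
        by (simp only: Pt Gi_def)
      have Jt: "J t = transpose G ** Jd0 ** G" using Jeq[OF tS] Kt Pt by simp
      have Mc: "transpose G ** M ** G = - (gamma t *\<^sub>R J t) + gamma t *\<^sub>R (transpose (Hm ** G) ** Ri ** (Hm ** G))"
        using DM unfolding fisher tensor_uncoord_def Pt by simp
      have A: "((\<lambda>\<tau>. transpose (matrix_inv (jacobian (s \<tau>) (th \<tau>))) ** J \<tau> ** matrix_inv (jacobian (s \<tau>) (th \<tau>)))
          has_vector_derivative (- (transpose F ** Jd0) - Jd0 ** F - gamma t *\<^sub>R Jd0 + gamma t *\<^sub>R (transpose Hm ** Ri ** Hm))) (at t within S)"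
        using hJd unfolding J'_def jd_algebra[OF GGi GiG Jt PQ Mc] .
      have invJ: "invertible (J t)" using pos_def_invertible conjunct1[OF conjunct2[OF ongS[OF tS]]] by blast
      define Ji where "Ji = matrix_inv (J t)"
      have JJi: "J t ** Ji = mat 1" using matrix_inv_props[OF invJ] Ji_def by auto
      have Jd0inv: "matrix_inv Jd0 = G ** Ji ** transpose G"
      proof (rule matrix_inv_unique)
        have "Jd0 ** (G ** Ji ** transpose G) = transpose Gi ** (J t ** ((Gi ** G) ** Ji)) ** transpose G"
          by (simp only: Jd0_def matrix_mul_assoc)
        also have "\<dots> = transpose Gi ** transpose G" by (simp only: GiG matrix_mul_lid JJi matrix_mul_rid)
        also have "\<dots> = mat 1" by (simp only: matrix_transpose_mul[symmetric] GGi transpose_mat)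
        finally show "Jd0 ** (G ** Ji ** transpose G) = mat 1" .
      qed
      have Rsym: "transpose Ri = Ri"
      proof -
        have Rt: "transpose (R t) = R t" "invertible (R t)" using R_cov t unfolding pos_semidef_def by auto
        have "transpose (R t) ** transpose Ri = mat 1"
          using matrix_inv_props(2)[OF Rt(2)] by (simp only: Ri_def matrix_transpose_mul[symmetric] transpose_mat)
        then have "matrix_inv (transpose (R t)) = transpose Ri" by (rule matrix_inv_unique)
        then show ?thesis using Rt(1) Ri_def by simp
      qed
      define k where "k x = h (s t x) (u t)" for x
      define L where "L = Hm ** G"
      have dk: "(k has_derivative (\<lambda>v. L *v v)) (at x0)"
        using compk unfolding k_def[symmetric] L_def by (simp add: Gv Hv matrix_vector_mul_assoc[symmetric])
      have dRk: "((\<lambda>x. Ri *v k x) has_derivative (\<lambda>v. Ri *v (L *v v))) (at x0)"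
        using bounded_linear.has_derivative[OF matrix_vector_mul_bounded_linear dk] .
      have elleq: "obs_loglik_rate s h u R y t = (\<lambda>x. k x \<bullet> (Ri *v y t) - 1/2 * (k x \<bullet> (Ri *v k x)))"
        by (simp add: fun_eq_iff obs_loglik_rate_def k_def Ri_def)
      have dl: "(obs_loglik_rate s h u R y t has_derivative
          (\<lambda>v. (k x0 \<bullet> 0 + (L *v v) \<bullet> (Ri *v y t)) - 1/2 * (k x0 \<bullet> (Ri *v (L *v v)) + (L *v v) \<bullet> (Ri *v k x0)))) (at x0)"
      proof -
        have i1: "((\<lambda>x. k x \<bullet> (Ri *v y t)) has_derivative (\<lambda>v. k x0 \<bullet> 0 + (L *v v) \<bullet> (Ri *v y t))) (at x0)"
          by (rule has_derivative_inner[OF dk has_derivative_const])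
        have i2: "((\<lambda>x. k x \<bullet> (Ri *v k x)) has_derivative (\<lambda>v. k x0 \<bullet> (Ri *v (L *v v)) + (L *v v) \<bullet> (Ri *v k x0))) (at x0)"
          by (rule has_derivative_inner[OF dk dRk])
        show ?thesis unfolding elleq by (rule has_derivative_diff[OF i1 has_derivative_mult_right[OF i2]])
      qed
      have gradeq: "grad (obs_loglik_rate s h u R y t) x0 = transpose G *v (transpose Hm *v (Ri *v (y t - k x0)))"
      proof -
        have "grad (obs_loglik_rate s h u R y t) x0 = (\<chi> i. (k x0 \<bullet> 0 + (L *v axis i 1) \<bullet> (Ri *v y t))
             - 1/2 * (k x0 \<bullet> (Ri *v (L *v axis i 1)) + (L *v axis i 1) \<bullet> (Ri *v k x0)))"
          unfolding grad_def frechet_derivative_at[OF dl, symmetric] by (rule refl)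
        also have "\<dots> = (\<chi> i. (L *v axis i 1) \<bullet> (Ri *v (y t - k x0)))"
        proof -
          have sw: "k x0 \<bullet> (Ri *v w) = w \<bullet> (Ri *v k x0)" for w
          proof -
            have "k x0 \<bullet> (Ri *v w) = (transpose Ri *v k x0) \<bullet> w" by (rule inner_mat)
            then show ?thesis by (simp only: Rsym inner_commute)
          qed
          have comp: "(k x0 \<bullet> 0 + a \<bullet> (Ri *v y t)) - 1/2 * (k x0 \<bullet> (Ri *v a) + a \<bullet> (Ri *v k x0))
                 = a \<bullet> (Ri *v (y t - k x0))" for a
            unfolding sw matrix_vector_mult_diff_distrib inner_diff_right by simp
          show ?thesis by (simp only: comp)
        qed
        also have "\<dots> = transpose L *v (Ri *v (y t - k x0))"
          unfolding vec_eq_iff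
        proof
          fix i
          have "(transpose L *v (Ri *v (y t - k x0))) $ i = (transpose L *v (Ri *v (y t - k x0))) \<bullet> axis i 1"
            by (rule cart_eq_inner_axis)
          also have "\<dots> = (Ri *v (y t - k x0)) \<bullet> (L *v axis i 1)" by (rule inner_mat[symmetric])
          finally show "(\<chi> i. (L *v axis i 1) \<bullet> (Ri *v (y t - k x0))) $ i = (transpose L *v (Ri *v (y t - k x0))) $ i"
            by (simp add: inner_commute)
        qed
        also have "\<dots> = transpose G *v (transpose Hm *v (Ri *v (y t - k x0)))"
          by (simp only: L_def matrix_transpose_mul matrix_vector_mul_assoc matrix_mul_assoc)
        finally show ?thesis .
      qed
      define innov where "innov = matrix_inv Jd0 *v (transpose Hm *v (Ri *v (y t - k x0)))"
      have th'eq: "th' = eta t *\<^sub>R (Gi *v innov)"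
      proof -
        have "Gi *v innov = (Gi ** G) ** Ji ** transpose G *v (transpose Hm *v (Ri *v (y t - k x0)))"
          by (simp only: innov_def Jd0inv matrix_vector_mul_assoc matrix_mul_assoc)
        also have "\<dots> = Ji *v grad (obs_loglik_rate s h u R y t) x0"
          by (simp only: GiG gradeq matrix_mul_lid matrix_vector_mul_assoc matrix_mul_assoc)
        finally show ?thesis by (simp add: th'_def Ji_def)
      qed
      have B: "(th has_vector_derivative eta t *\<^sub>R (Gi *v innov)) (at t within S)"
        using hth th'eq by simp
      have C: "((\<lambda>\<tau>. s \<tau> (th \<tau>)) has_vector_derivative f t (s t x0) + eta t *\<^sub>R innov) (at t within S)"
      proof -
        have pair: "((\<lambda>\<tau>. (\<tau>, th \<tau>)) has_derivative (\<lambda>h. (h, h *\<^sub>R th'))) (at t within S)"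
          using hth unfolding has_vector_derivative_def by (auto intro!: derivative_eq_intros)
        have dgz: "(g has_derivative Dg z) (at (t, th t))" using dg[OF zU0] z_def x0_def by simp
        have "((\<lambda>\<tau>. g (\<tau>, th \<tau>)) has_derivative (\<lambda>h. Dg z (h, h *\<^sub>R th'))) (at t within S)"
          using has_derivative_compose[OF pair dgz] .
        moreover have "(\<lambda>h. Dg z (h, h *\<^sub>R th')) = (\<lambda>h. h *\<^sub>R (f t (s t x0) + eta t *\<^sub>R innov))"
        proof
          fix h :: real
          have "(h, h *\<^sub>R th') = h *\<^sub>R ((1, 0) + (0, th'))" by simp
          then have "Dg z (h, h *\<^sub>R th') = h *\<^sub>R (Dg z (1, 0) + Dg z (0, th'))"
            using linear_scale[OF blDg[OF zU0]] linear_add[OF blDg[OF zU0]] by metis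
          also have "Dg z (1, 0) = f t (s t x0)" using ode[OF tS x0T] z_def by simp
          also have "Dg z (0, th') = eta t *\<^sub>R innov"
            unfolding Gv[symmetric] th'eq
            by (simp only: matrix_vector_mult_scaleR matrix_vector_mul_assoc GGi matrix_vector_mul_lid)
          finally show "Dg z (h, h *\<^sub>R th') = h *\<^sub>R (f t (s t x0) + eta t *\<^sub>R innov)" .
        qed
        ultimately show ?thesis by (simp add: has_vector_derivative_def gapp)
      qed
      show ?thesis using A B C
        unfolding S_def F_def Jd0_def Gi_def G_def Hm_def Ri_def innov_def k_def x0_def by blast
    qed
  qed simp
qed

end
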